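(* Let $G$ be a finite simple graph on $n$ vertices with minimum degree $\delta(G)\geq 1$. Then $f_o(G)\geq \frac{n}{10000}$; that is, there is a set $V_0\subseteq V(G)$ with $|V_0|\geq n/10000$ such that every vertex of the induced subgraph $G[V_0]$ has odd degree in $G[V_0]$.
   Context: For a graph $G$, $f_o(G)$ denotes the maximum of $|V_0|$ over all $V_0\subseteq V(G)$ such that the induced subgraph $G[V_0]$ has all degrees odd. *)

theory Defs
  imports Main
begin

definition simple_graph :: "'a set \<Rightarrow> ('a \<Rightarrow> 'a \<Rightarrow> bool) \<Rightarrow> bool" where
  "simple_graph V E \<longleftrightarrow> finite V \<and> (\<forall>u v. E u v \<longrightarrow> u \<in> V \<and> v \<in> V)
     \<and> (\<forall>u v. E u v \<longrightarrow> E v u) \<and> (\<forall>v. \<not> E v v)"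

definition induced_degree :: "('a \<Rightarrow> 'a \<Rightarrow> bool) \<Rightarrow> 'a set \<Rightarrow> 'a \<Rightarrow> nat" where
  "induced_degree E S v = card {u \<in> S. E v u}"

definition degree :: "'a set \<Rightarrow> ('a \<Rightarrow> 'a \<Rightarrow> bool) \<Rightarrow> 'a \<Rightarrow> nat" where
  "degree V E v = induced_degree E V v"

definition all_odd_induced :: "'a set \<Rightarrow> ('a \<Rightarrow> 'a \<Rightarrow> bool) \<Rightarrow> 'a set \<Rightarrow> bool" where
  "all_odd_induced V E S \<longleftrightarrow> S \<subseteq> V \<and> (\<forall>v\<in>S. odd (induced_degree E S v))"

definition f_o :: "'a set \<Rightarrow> ('a \<Rightarrow> 'a \<Rightarrow> bool) \<Rightarrow> nat" where
  "f_o V E = Max (card ` {S. all_odd_induced V E S})"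

end

theory Submission
  imports Defs
begin


lemma card_filter_sum:
  assumes "finite A"
  shows "card {x\<in>A. P x} = (\<Sum>x\<in>A. if P x then 1 else (0::nat))"
proof -
  have "card {x\<in>A. P x} = card (A \<inter> Collect P)" by (rule arg_cong[where f=card]) auto
  then show ?thesis using assms by (simp add: sum.If_cases)
qed

lemma card_insert_filter:
  assumes "finite A" "a \<notin> A"
  shows "card {x\<in>insert a A. R x} = (if R a then Suc (card {x\<in>A. R x}) else card {x\<in>A. R x})"
proof -
  have e: "{x\<in>insert a A. R x} = (if R a then insert a {x\<in>A. R x} else {x\<in>A. R x})"
    by auto
  show ?thesis unfolding e using assms by auto
qed

lemma par_sum:
  assumes "finite A"
  shows "odd (\<Sum>x\<in>A. (f x::nat)) \<longleftrightarrow> odd (card {x\<in>A. odd (f x)})"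
  using assms
proof (induction A rule: finite_induct)
  case empty then show ?case by simp
next
  case (insert a A)
  have c: "card {x\<in>insert a A. odd (f x)} = (if odd (f a) then Suc (card {x\<in>A. odd (f x)}) else card {x\<in>A. odd (f x)})"
    using card_insert_filter[OF insert(1,2)] .
  have s: "sum f (insert a A) = f a + sum f A" using insert(1,2) by simp
  show ?case unfolding c s using insert(3) by (cases "odd (f a)") simp_all
qed

lemma par_xor:
  assumes "finite A"
  shows "odd (card {x\<in>A. P x \<noteq> Q x}) \<longleftrightarrow> (odd (card {x\<in>A. P x}) \<noteq> odd (card {x\<in>A. Q x}))"
  using assms
proof (induction A rule: finite_induct)
  case empty then show ?case by simp
next
  case (insert a A)
  note c = card_insert_filter[OF insert(1,2)]
  show ?case unfolding c[of "\<lambda>x. P x \<noteq> Q x"] c[of P] c[of Q] using insert(3)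
    by (cases "P a"; cases "Q a") simp_all
qed

lemma card_swap:
  assumes "finite A" "finite B"
  shows "(\<Sum>a\<in>A. card {b\<in>B. P a b}) = (\<Sum>b\<in>B. card {a\<in>A. P a b})"
proof -
  have "(\<Sum>a\<in>A. card {b\<in>B. P a b}) = (\<Sum>a\<in>A. \<Sum>b\<in>B. if P a b then 1 else (0::nat))"
    using assms by (simp add: card_filter_sum)
  also have "\<dots> = (\<Sum>b\<in>B. \<Sum>a\<in>A. if P a b then 1 else (0::nat))"
    by (rule sum.swap)
  also have "\<dots> = (\<Sum>b\<in>B. card {a\<in>A. P a b})"
    using assms by (simp add: card_filter_sum)
  finally show ?thesis .
qed



definition tog :: "'a \<Rightarrow> 'a set \<Rightarrow> 'a set" where
  "tog a Y = (if a \<in> Y then Y - {a} else insert a Y)"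

lemma tog_tog: "tog a (tog a Y) = Y"
  unfolding tog_def by auto

lemma tog_par:
  assumes "finite Y" "a \<in> M"
  shows "odd (card (M \<inter> tog a Y)) \<longleftrightarrow> \<not> odd (card (M \<inter> Y))"
proof (cases "a \<in> Y")
  case True
  have fin: "finite (M \<inter> Y)" using assms by simp
  have "M \<inter> tog a Y = (M \<inter> Y) - {a}" using True unfolding tog_def by auto
  moreover have "a \<in> M \<inter> Y" using True assms by simp
  ultimately have "card (M \<inter> tog a Y) + 1 = card (M \<inter> Y)"
    using fin by (metis One_nat_def Suc_pred card_Diff_singleton card_gt_0_iff empty_iff
        Suc_eq_plus1)
  then show ?thesis by presburger
next
  case False
  have fin: "finite (M \<inter> Y)" using assms by simp
  have "M \<inter> tog a Y = insert a (M \<inter> Y)" using False assms unfolding tog_def by auto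
  then have "card (M \<inter> tog a Y) = card (M \<inter> Y) + 1" using fin False by simp
  then show ?thesis by presburger
qed

lemma tog_sub: "a \<in> X \<Longrightarrow> Y \<subseteq> X \<Longrightarrow> tog a Y \<subseteq> X"
  unfolding tog_def by auto

lemma half_odd:
  assumes "finite X" "a \<in> M" "a \<in> X"
  shows "2 * card {Y. Y \<subseteq> X \<and> odd (card (M \<inter> Y))} = 2 ^ card X"
proof -
  define Od where "Od = {Y. Y \<subseteq> X \<and> odd (card (M \<inter> Y))}"
  define Ev where "Ev = {Y. Y \<subseteq> X \<and> \<not> odd (card (M \<inter> Y))}"
  have finY: "\<And>Y. Y \<subseteq> X \<Longrightarrow> finite Y" using assms(1) finite_subset by blast
  have "bij_betw (tog a) Od Ev"
  proof (rule bij_betw_byWitness[where f'="tog a"])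
    show "\<forall>x\<in>Od. tog a (tog a x) = x" by (simp add: tog_tog)
    show "\<forall>x\<in>Ev. tog a (tog a x) = x" by (simp add: tog_tog)
    show "tog a ` Od \<subseteq> Ev" unfolding Od_def Ev_def
      using tog_par[OF finY assms(2)] tog_sub[OF assms(3)] by auto
    show "tog a ` Ev \<subseteq> Od" unfolding Od_def Ev_def
      using tog_par[OF finY assms(2)] tog_sub[OF assms(3)] by auto
  qed
  then have c: "card Od = card Ev" by (rule bij_betw_same_card)
  have u: "Od \<union> Ev = Pow X" unfolding Od_def Ev_def by auto
  have d: "Od \<inter> Ev = {}" unfolding Od_def Ev_def by auto
  have "card Od + card Ev = card (Pow X)"
    using card_Un_disjoint[of Od Ev] u d assms(1) by (metis finite_Pow_iff finite_Un)
  then have "card Od + card Ev = 2 ^ card X" using assms(1) by (simp add: card_Pow)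
  then show ?thesis using c unfolding Od_def by simp
qed

lemma half_even:
  assumes "finite X"
  shows "2 * card {Y. Y \<subseteq> X \<and> even (card (M \<inter> Y))} \<ge> 2 ^ card X"
proof (cases "M \<inter> X = {}")
  case True
  have "{Y. Y \<subseteq> X \<and> even (card (M \<inter> Y))} = Pow X"
  proof -
    have "\<And>Y. Y \<subseteq> X \<Longrightarrow> M \<inter> Y = {}" using True by blast
    then show ?thesis by auto
  qed
  then show ?thesis using assms by (simp add: card_Pow)
next
  case False
  then obtain a where a: "a \<in> M" "a \<in> X" by blast
  have u: "{Y. Y \<subseteq> X \<and> odd (card (M \<inter> Y))} \<union> {Y. Y \<subseteq> X \<and> even (card (M \<inter> Y))} = Pow X" by auto
  have d: "{Y. Y \<subseteq> X \<and> odd (card (M \<inter> Y))} \<inter> {Y. Y \<subseteq> X \<and> even (card (M \<inter> Y))} = {}" by auto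
  have fin: "finite (Pow X)" using assms by simp
  have "card {Y. Y \<subseteq> X \<and> odd (card (M \<inter> Y))} + card {Y. Y \<subseteq> X \<and> even (card (M \<inter> Y))} = card (Pow X)"
  proof -
    have s1: "{Y. Y \<subseteq> X \<and> odd (card (M \<inter> Y))} \<subseteq> Pow X" by auto
    have s2: "{Y. Y \<subseteq> X \<and> even (card (M \<inter> Y))} \<subseteq> Pow X" by auto
    show ?thesis
      using card_Un_disjoint[OF finite_subset[OF s1 fin] finite_subset[OF s2 fin] d] u by simp
  qed
  then have "card {Y. Y \<subseteq> X \<and> odd (card (M \<inter> Y))} + card {Y. Y \<subseteq> X \<and> even (card (M \<inter> Y))} = 2 ^ card X"
    using assms by (simp add: card_Pow)
  then show ?thesis using half_odd[OF assms a] by simp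
qed



definition evenset :: "('a \<Rightarrow> 'a \<Rightarrow> bool) \<Rightarrow> 'a set \<Rightarrow> bool" where
  "evenset E A \<longleftrightarrow> (\<forall>v\<in>A. even (card {u\<in>A. E v u}))"

lemma gallai_step:
  fixes E :: "'a \<Rightarrow> 'a \<Rightarrow> bool"
  assumes fin: "finite V" and sym: "\<forall>u v. E u v \<longrightarrow> E v u" and irr: "\<forall>v. \<not> E v v"
    and vV: "v \<in> V"
    and N_def: "N = {u\<in>V. E v u}"
    and E'_def: "E' = (\<lambda>x y. E x y \<noteq> (x \<in> N \<and> y \<in> N \<and> x \<noteq> y))"
    and P: "P \<subseteq> V - {v}" "evenset E' P"
  shows "(even (card (N \<inter> P)) \<longrightarrow> evenset E (insert v P)) \<and>
         (odd (card (N \<inter> P)) \<longrightarrow> evenset E P)"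
proof -
  have finP: "finite P" using fin P(1) finite_subset by blast
  have vP: "v \<notin> P" using P(1) by blast
  have key: "odd (card {u\<in>P. E' x u}) \<longleftrightarrow>
     (odd (card {u\<in>P. E x u}) \<noteq> (x \<in> N \<and> even (card (N \<inter> P))))" if xP: "x \<in> P" for x
  proof -
    have "odd (card {u\<in>P. E' x u}) \<longleftrightarrow>
       (odd (card {u\<in>P. E x u}) \<noteq> odd (card {u\<in>P. x \<in> N \<and> u \<in> N \<and> x \<noteq> u}))"
    proof -
      have "{u\<in>P. E' x u} = {u\<in>P. E x u \<noteq> (x \<in> N \<and> u \<in> N \<and> x \<noteq> u)}"
        unfolding E'_def by simp
      then show ?thesis using par_xor[OF finP, of "E x" "\<lambda>u. x \<in> N \<and> u \<in> N \<and> x \<noteq> u"]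
        by simp
    qed
    moreover have "odd (card {u\<in>P. x \<in> N \<and> u \<in> N \<and> x \<noteq> u}) \<longleftrightarrow> (x \<in> N \<and> even (card (N \<inter> P)))"
    proof (cases "x \<in> N")
      case True
      have e: "{u\<in>P. x \<in> N \<and> u \<in> N \<and> x \<noteq> u} = (N \<inter> P) - {x}" using True by auto
      have fNP: "finite (N \<inter> P)" using finP by simp
      have xNP: "x \<in> N \<inter> P" using True xP by simp
      have "card ((N \<inter> P) - {x}) + 1 = card (N \<inter> P)"
        using card_Suc_Diff1[OF fNP xNP] by simp
      then show ?thesis unfolding e using True by presburger
    next
      case False
      then show ?thesis by simp
    qed
    ultimately show ?thesis by blast
  qed
  have nbE: "{u\<in>insert v P. E x u} = insert v {u\<in>P. E x u}" if "x \<in> N" for x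
  proof -
    have "E x v" using that sym unfolding N_def by blast
    then show ?thesis by blast
  qed
  have nbE2: "{u\<in>insert v P. E x u} = {u\<in>P. E x u}" if "x \<notin> N" "x \<in> P" for x
  proof -
    have "x \<in> V" using that P(1) by blast
    then have "\<not> E x v" using that sym unfolding N_def by blast
    then show ?thesis by blast
  qed
  have nv: "{u\<in>insert v P. E v u} = N \<inter> P"
    using irr P(1) unfolding N_def by auto
  have finnb: "finite {u\<in>P. E x u}" for x using finP by simp
  have ev': "even (card {u\<in>P. E' x u})" if "x \<in> P" for x
    using P(2) that unfolding evenset_def by blast
  show ?thesis
  proof (intro conjI impI)
    assume ev: "even (card (N \<inter> P))"
    show "evenset E (insert v P)" unfolding evenset_def
    proof
      fix x assume x: "x \<in> insert v P"
      show "even (card {u\<in>insert v P. E x u})"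
      proof (cases "x = v")
        case True then show ?thesis using nv ev by simp
      next
        case False
        then have xP: "x \<in> P" using x by simp
        show ?thesis
        proof (cases "x \<in> N")
          case True
          have "card {u\<in>insert v P. E x u} = Suc (card {u\<in>P. E x u})"
            unfolding nbE[OF True] using vP finnb by simp
          then show ?thesis using key[OF xP] ev'[OF xP] True ev by simp
        next
          case False
          then show ?thesis unfolding nbE2[OF False xP] using key[OF xP] ev'[OF xP] by simp
        qed
      qed
    qed
  next
    assume od: "odd (card (N \<inter> P))"
    show "evenset E P" unfolding evenset_def
    proof
      fix x assume xP: "x \<in> P"
      show "even (card {u\<in>P. E x u})" using key[OF xP] ev'[OF xP] od by auto
    qed
  qed
qed

lemma gallai:
  fixes E :: "'a \<Rightarrow> 'a \<Rightarrow> bool"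
  assumes "finite V" "\<forall>u v. E u v \<longrightarrow> E v u" "\<forall>v. \<not> E v v"
  shows "\<exists>A\<subseteq>V. evenset E A \<and> evenset E (V - A)"
  using assms
proof (induction "card V" arbitrary: V E rule: less_induct)
  case less
  show ?case
  proof (cases "evenset E V")
    case True
    then show ?thesis by (intro exI[of _ V]) (auto simp: evenset_def)
  next
    case False
    then obtain v where v: "v \<in> V" "odd (card {u\<in>V. E v u})" unfolding evenset_def by blast
    define N where "N = {u\<in>V. E v u}"
    define E' where "E' = (\<lambda>x y. E x y \<noteq> (x \<in> N \<and> y \<in> N \<and> x \<noteq> y))"
    define V0 where "V0 = V - {v}"
    have lt: "card V0 < card V" unfolding V0_def using v(1) less.prems(1)
      by (meson card_Diff1_less)
    have s': "\<forall>u w. E' u w \<longrightarrow> E' w u" using less.prems(2) unfolding E'_def by blast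
    have i': "\<forall>u. \<not> E' u u" using less.prems(3) unfolding E'_def by blast
    obtain A0 where A0: "A0 \<subseteq> V0" "evenset E' A0" "evenset E' (V0 - A0)"
      using less.hyps[OF lt _ s' i'] less.prems(1) unfolding V0_def by blast
    note st = gallai_step[OF less.prems(1,2,3) v(1) N_def E'_def]
    have NV0: "N \<subseteq> V0" unfolding N_def V0_def using less.prems(3) by auto
    have finN: "finite N" using NV0 less.prems(1) unfolding V0_def by (meson finite_Diff finite_subset)
    have split: "card (N \<inter> A0) + card (N \<inter> (V0 - A0)) = card N"
    proof -
      have "N = (N \<inter> A0) \<union> (N \<inter> (V0 - A0))" using NV0 by blast
      moreover have "(N \<inter> A0) \<inter> (N \<inter> (V0 - A0)) = {}" by blast
      ultimately show ?thesis using finN card_Un_disjoint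
        by (metis finite_Int)
    qed
    have oddN: "odd (card N)" using v(2) unfolding N_def .
    have A0s: "A0 \<subseteq> V - {v}" "V0 - A0 \<subseteq> V - {v}" using A0(1) unfolding V0_def by auto
    show ?thesis
    proof (cases "even (card (N \<inter> A0))")
      case True
      have o: "odd (card (N \<inter> (V0 - A0)))" using True split oddN by presburger
      have e1: "evenset E (insert v A0)" using st[OF A0s(1) A0(2)] True by blast
      have e2: "evenset E (V0 - A0)" using st[OF A0s(2) A0(3)] o by blast
      have eq: "V - insert v A0 = V0 - A0" unfolding V0_def by blast
      show ?thesis using e1 e2 eq A0(1) v(1) unfolding V0_def
        by (intro exI[of _ "insert v A0"]) auto
    next
      case False
      have o: "even (card (N \<inter> (V0 - A0)))" using False split oddN by presburger
      have e1: "evenset E A0" using st[OF A0s(1) A0(2)] False by blast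
      have e2: "evenset E (insert v (V0 - A0))" using st[OF A0s(2) A0(3)] o by blast
      have eq: "V - A0 = insert v (V0 - A0)" using A0(1) v(1) unfolding V0_def by blast
      show ?thesis using e1 e2 eq A0(1) unfolding V0_def
        by (intro exI[of _ "A0"]) auto
    qed
  qed
qed



lemma par_aux: "odd (b::nat) = odd (c + x) \<Longrightarrow> odd x = odd q \<Longrightarrow> odd a = odd q \<Longrightarrow> odd c \<Longrightarrow> odd (a + b)"
  by (auto simp: even_add)

lemma odd_construct:
  assumes sg: "simple_graph V E"
    and C: "C \<subseteq> V" "\<forall>a\<in>C. \<forall>b\<in>C. \<not> E a b"
    and S: "S \<subseteq> V - C" "\<forall>y\<in>S. odd (card {c\<in>C. E y c})"
    and ev: "\<forall>y\<in>S. even (card {z\<in>S. z \<noteq> y \<and> (E y z \<noteq> odd (card {c\<in>C. E y c \<and> E z c}))})"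
  shows "all_odd_induced V E (S \<union> {c\<in>C. odd (card {u\<in>S. E c u})})"
proof -
  have finV: "finite V" and sym: "\<forall>u v. E u v \<longrightarrow> E v u" and irr: "\<forall>v. \<not> E v v"
    using sg unfolding simple_graph_def by auto
  define CS where "CS = {c\<in>C. odd (card {u\<in>S. E c u})}"
  define T where "T = S \<union> CS"
  have finS: "finite S" using S(1) finV finite_subset by blast
  have finC: "finite C" using C(1) finV finite_subset by blast
  have TV: "T \<subseteq> V" unfolding T_def CS_def using S(1) C(1) by blast
  have degC: "odd (card {u\<in>T. E c u})" if c: "c \<in> CS" for c
  proof -
    have "{u\<in>T. E c u} = {u\<in>S. E c u}" using c C(2) unfolding T_def CS_def by blast
    then show ?thesis using c unfolding CS_def by simp
  qed
  have degS: "odd (card {u\<in>T. E y u})" if y: "y \<in> S" for y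
  proof -
    define cd where "cd z = card {c\<in>C. E y c \<and> E z c}" for z
    define Ny where "Ny = {c\<in>C. E y c}"
    define f where "f c = card {u\<in>S. E c u}" for c
    have finNy: "finite Ny" unfolding Ny_def using finC by simp
    have disj: "{u\<in>S. E y u} \<inter> {u\<in>CS. E y u} = {}" using S(1) unfolding CS_def by blast
    have un: "{u\<in>T. E y u} = {u\<in>S. E y u} \<union> {u\<in>CS. E y u}" unfolding T_def by blast
    have c1: "card {u\<in>T. E y u} = card {u\<in>S. E y u} + card {u\<in>CS. E y u}"
      unfolding un using card_Un_disjoint[OF _ _ disj] finS finC unfolding CS_def by simp
    have e2: "{u\<in>CS. E y u} = {c\<in>Ny. odd (f c)}" unfolding CS_def Ny_def f_def by blast
    have p2: "odd (card {u\<in>CS. E y u}) \<longleftrightarrow> odd (\<Sum>c\<in>Ny. f c)"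
      unfolding e2 using par_sum[OF finNy, of f] by simp
    have sw: "(\<Sum>c\<in>Ny. f c) = (\<Sum>z\<in>S. cd z)"
    proof -
      have "(\<Sum>c\<in>Ny. f c) = (\<Sum>z\<in>S. card {c\<in>Ny. E c z})"
        unfolding f_def by (rule card_swap[OF finNy finS])
      also have "\<dots> = (\<Sum>z\<in>S. cd z)"
      proof (rule sum.cong)
        fix z assume "z \<in> S"
        have "{c\<in>Ny. E c z} = {c\<in>C. E y c \<and> E z c}" unfolding Ny_def using sym by blast
        then show "card {c\<in>Ny. E c z} = cd z" unfolding cd_def by simp
      qed simp
      finally show ?thesis .
    qed
    have sp: "(\<Sum>z\<in>S. cd z) = cd y + (\<Sum>z\<in>S-{y}. cd z)"
      using sum.remove[OF finS y] .
    have cdy: "odd (cd y)" using S(2) y unfolding cd_def by simp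
    have finSy: "finite (S - {y})" using finS by simp
    have p3: "odd (\<Sum>z\<in>S-{y}. cd z) \<longleftrightarrow> odd (card {z\<in>S-{y}. odd (cd z)})"
      using par_sum[OF finSy] .
    have e4: "{z\<in>S. z \<noteq> y \<and> (E y z \<noteq> odd (cd z))} = {z\<in>S-{y}. E y z \<noteq> odd (cd z)}" by blast
    have ev4: "even (card {z\<in>S-{y}. E y z \<noteq> odd (cd z)})"
    proof -
      have "even (card {z\<in>S. z \<noteq> y \<and> (E y z \<noteq> odd (cd z))})"
        using ev y unfolding cd_def by blast
      then show ?thesis unfolding e4 .
    qed
    have p4: "odd (card {z\<in>S-{y}. E y z}) \<longleftrightarrow> odd (card {z\<in>S-{y}. odd (cd z)})"
      using ev4 par_xor[OF finSy, of "E y" "\<lambda>z. odd (cd z)"] by simp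
    have e5: "{u\<in>S. E y u} = {z\<in>S-{y}. E y z}" using irr by blast
    have p2': "odd (card {u\<in>CS. E y u}) = odd (cd y + (\<Sum>z\<in>S-{y}. cd z))"
      using p2 sw sp by simp
    show ?thesis unfolding c1 e5 by (rule par_aux[OF p2' p3 p4 cdy])
  qed
  show ?thesis unfolding all_odd_induced_def induced_degree_def
    using TV degC degS unfolding T_def CS_def by blast
qed



lemma fo_ge:
  assumes "simple_graph V E" "all_odd_induced V E T"
  shows "card T \<le> f_o V E"
proof -
  have fin: "finite V" using assms(1) unfolding simple_graph_def by simp
  have "{S. all_odd_induced V E S} \<subseteq> Pow V" unfolding all_odd_induced_def by auto
  then have "finite (card ` {S. all_odd_induced V E S})" using fin
    by (meson finite_Pow_iff finite_imageI finite_subset)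
  moreover have "card T \<in> card ` {S. all_odd_induced V E S}" using assms(2) by simp
  ultimately show ?thesis unfolding f_o_def by (rule Max_ge)
qed

lemma two_sets:
  assumes sg: "simple_graph V E"
    and C: "C \<subseteq> V" "\<forall>a\<in>C. \<forall>b\<in>C. \<not> E a b"
    and U'': "U' \<subseteq> V - C" "\<forall>y\<in>U'. odd (card {c\<in>C. E y c})"
  shows "card U' + card {c\<in>C. odd (card {u\<in>U'. E c u})} \<le> 2 * f_o V E"
proof -
  have finV: "finite V" and sym: "\<forall>u v. E u v \<longrightarrow> E v u" and irr: "\<forall>v. \<not> E v v"
    using sg unfolding simple_graph_def by auto
  have finU: "finite U'" using U''(1) finV finite_subset by blast
  have finC: "finite C" using C(1) finV finite_subset by blast
  define E2 where "E2 y z = (y \<in> U' \<and> z \<in> U' \<and> y \<noteq> z \<and> (E y z \<noteq> odd (card {c\<in>C. E y c \<and> E z c})))" for y z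
  have s2: "\<forall>u v. E2 u v \<longrightarrow> E2 v u" unfolding E2_def using sym by (auto simp: conj_commute)
  have i2: "\<forall>v. \<not> E2 v v" unfolding E2_def by simp
  obtain S1 where S1: "S1 \<subseteq> U'" "evenset E2 S1" "evenset E2 (U' - S1)"
    using gallai[OF finU s2 i2] by blast
  have part: "card S + card {c\<in>C. odd (card {u\<in>S. E c u})} \<le> f_o V E"
    if S: "S \<subseteq> U'" "evenset E2 S" for S
  proof -
    have ev: "\<forall>y\<in>S. even (card {z\<in>S. z \<noteq> y \<and> (E y z \<noteq> odd (card {c\<in>C. E y c \<and> E z c}))})"
    proof
      fix y assume y: "y \<in> S"
      have "{z\<in>S. E2 y z} = {z\<in>S. z \<noteq> y \<and> (E y z \<noteq> odd (card {c\<in>C. E y c \<and> E z c}))}"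
        using S(1) y unfolding E2_def by auto
      then show "even (card {z\<in>S. z \<noteq> y \<and> (E y z \<noteq> odd (card {c\<in>C. E y c \<and> E z c}))})"
        using S(2) y unfolding evenset_def by metis
    qed
    have oc: "all_odd_induced V E (S \<union> {c\<in>C. odd (card {u\<in>S. E c u})})"
      by (rule odd_construct[OF sg C]) (use S(1) U'' ev in auto)
    have finS: "finite S" using S(1) finU finite_subset by blast
    have d: "S \<inter> {c\<in>C. odd (card {u\<in>S. E c u})} = {}" using S(1) U''(1) by blast
    have "card (S \<union> {c\<in>C. odd (card {u\<in>S. E c u})}) = card S + card {c\<in>C. odd (card {u\<in>S. E c u})}"
      using card_Un_disjoint[OF finS _ d] finC by simp
    then show ?thesis using fo_ge[OF sg oc] by simp
  qed
  have p1: "card S1 + card {c\<in>C. odd (card {u\<in>S1. E c u})} \<le> f_o V E"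
    using part S1 by blast
  have p2: "card (U' - S1) + card {c\<in>C. odd (card {u\<in>U' - S1. E c u})} \<le> f_o V E"
    using part S1 by blast
  have cU: "card U' = card S1 + card (U' - S1)"
    using S1(1) finU by (metis card_Diff_subset card_mono le_add_diff_inverse finite_subset)
  have sub: "{c\<in>C. odd (card {u\<in>U'. E c u})} \<subseteq>
      {c\<in>C. odd (card {u\<in>S1. E c u})} \<union> {c\<in>C. odd (card {u\<in>U' - S1. E c u})}"
  proof
    fix c assume c: "c \<in> {c\<in>C. odd (card {u\<in>U'. E c u})}"
    have "{u\<in>U'. E c u} = {u\<in>S1. E c u} \<union> {u\<in>U' - S1. E c u}" using S1(1) by blast
    moreover have "{u\<in>S1. E c u} \<inter> {u\<in>U' - S1. E c u} = {}" by blast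
    moreover have "finite {u\<in>S1. E c u}" "finite {u\<in>U' - S1. E c u}"
      using finU S1(1) by (auto intro: rev_finite_subset)
    ultimately have "card {u\<in>U'. E c u} = card {u\<in>S1. E c u} + card {u\<in>U' - S1. E c u}"
      using card_Un_disjoint by metis
    then show "c \<in> {c\<in>C. odd (card {u\<in>S1. E c u})} \<union> {c\<in>C. odd (card {u\<in>U' - S1. E c u})}"
      using c by auto
  qed
  have "card {c\<in>C. odd (card {u\<in>U'. E c u})} \<le>
      card ({c\<in>C. odd (card {u\<in>S1. E c u})} \<union> {c\<in>C. odd (card {u\<in>U' - S1. E c u})})"
    by (rule card_mono[OF _ sub]) (use finC in simp)
  also have "\<dots> \<le> card {c\<in>C. odd (card {u\<in>S1. E c u})} + card {c\<in>C. odd (card {u\<in>U' - S1. E c u})}"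
    by (rule card_Un_le)
  finally show ?thesis using p1 p2 cU by linarith
qed

lemma inner:
  assumes sg: "simple_graph V E"
    and C: "C \<subseteq> V" "\<forall>a\<in>C. \<forall>b\<in>C. \<not> E a b"
    and U_def: "U = {v\<in>V-C. odd (card {c\<in>C. E v c})}"
  shows "card U + card {c\<in>C. \<exists>u\<in>U. E c u} \<le> 4 * f_o V E"
proof -
  have finV: "finite V" using sg unfolding simple_graph_def by auto
  have finU: "finite U" unfolding U_def using finV by simp
  have finC: "finite C" using C(1) finV finite_subset by blast
  define CU where "CU = {c\<in>C. \<exists>u\<in>U. E c u}"
  define h where "h U' = card {c\<in>C. odd (card {u\<in>U'. E c u})}" for U'
  have finP: "finite (Pow U)" using finU by simp
  have gb: "card U' + h U' \<le> 2 * f_o V E" if "U' \<in> Pow U" for U'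
    unfolding h_def by (rule two_sets[OF sg C]) (use that in \<open>auto simp: U_def\<close>)
  have s1: "(\<Sum>U'\<in>Pow U. card U' + h U') \<le> card (Pow U) * (2 * f_o V E)"
  proof -
    have "(\<Sum>U'\<in>Pow U. card U' + h U') \<le> of_nat (card (Pow U)) * (2 * f_o V E)"
      by (rule sum_bounded_above) (rule gb)
    then show ?thesis by simp
  qed
  have cP: "card (Pow U) = 2 ^ card U" using finU by (simp add: card_Pow)
  have a1: "2 * (\<Sum>U'\<in>Pow U. card U') = card U * 2 ^ card U"
  proof -
    have "(\<Sum>U'\<in>Pow U. card U') = (\<Sum>U'\<in>Pow U. card {u\<in>U. u \<in> U'})"
    proof (rule sum.cong)
      fix U' assume "U' \<in> Pow U"
      then have "{u\<in>U. u \<in> U'} = U'" by auto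
      then show "card U' = card {u\<in>U. u \<in> U'}" by simp
    qed simp
    also have "\<dots> = (\<Sum>u\<in>U. card {U'\<in>Pow U. u \<in> U'})"
      by (rule card_swap[OF finP finU])
    finally have "2 * (\<Sum>U'\<in>Pow U. card U') = (\<Sum>u\<in>U. 2 * card {U'\<in>Pow U. u \<in> U'})"
      by (simp add: sum_distrib_left)
    also have "\<dots> = (\<Sum>u\<in>U. 2 ^ card U)"
    proof (rule sum.cong)
      fix u assume u: "u \<in> U"
      have ou: "odd (card ({u} \<inter> Y)) \<longleftrightarrow> u \<in> Y" for Y
        by (cases "u \<in> Y") auto
      have "{U'\<in>Pow U. u \<in> U'} = {Y. Y \<subseteq> U \<and> odd (card ({u} \<inter> Y))}" unfolding ou by auto
      then show "2 * card {U'\<in>Pow U. u \<in> U'} = 2 ^ card U"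
        using half_odd[OF finU _ u, of "{u}"] by simp
    qed simp
    finally show ?thesis by simp
  qed
  have a2: "2 * (\<Sum>U'\<in>Pow U. h U') \<ge> card CU * 2 ^ card U"
  proof -
    have "(\<Sum>U'\<in>Pow U. h U') = (\<Sum>c\<in>C. card {U'\<in>Pow U. odd (card {u\<in>U'. E c u})})"
      unfolding h_def by (rule card_swap[OF finP finC])
    also have "\<dots> \<ge> (\<Sum>c\<in>CU. card {U'\<in>Pow U. odd (card {u\<in>U'. E c u})})"
      by (rule sum_mono2[OF finC]) (auto simp: CU_def)
    finally have "2 * (\<Sum>U'\<in>Pow U. h U') \<ge> 2 * (\<Sum>c\<in>CU. card {U'\<in>Pow U. odd (card {u\<in>U'. E c u})})"
      by simp
    then have "2 * (\<Sum>U'\<in>Pow U. h U') \<ge> (\<Sum>c\<in>CU. 2 * card {U'\<in>Pow U. odd (card {u\<in>U'. E c u})})"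
      by (simp only: sum_distrib_left)
    moreover have "(\<Sum>c\<in>CU. 2 * card {U'\<in>Pow U. odd (card {u\<in>U'. E c u})}) = (\<Sum>c\<in>CU. 2 ^ card U)"
    proof (rule sum.cong)
      fix c assume c: "c \<in> CU"
      then obtain a where a: "a \<in> U" "E c a" unfolding CU_def by blast
      have "{U'\<in>Pow U. odd (card {u\<in>U'. E c u})} = {Y. Y \<subseteq> U \<and> odd (card ({u. E c u} \<inter> Y))}"
      proof -
        have "\<And>Y. {u\<in>Y. E c u} = {u. E c u} \<inter> Y" by blast
        then show ?thesis by auto
      qed
      then show "2 * card {U'\<in>Pow U. odd (card {u\<in>U'. E c u})} = 2 ^ card U"
        using half_odd[OF finU _ a(1), of "{u. E c u}"] a(2) by simp
    qed simp
    ultimately show ?thesis by simp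
  qed
  have "2 * (\<Sum>U'\<in>Pow U. card U' + h U') = 2 * (\<Sum>U'\<in>Pow U. card U') + 2 * (\<Sum>U'\<in>Pow U. h U')"
    by (simp only: sum.distrib add_mult_distrib2)
  moreover have "(card U + card CU) * 2 ^ card U = card U * 2 ^ card U + card CU * 2 ^ card U"
    by (rule add_mult_distrib)
  ultimately have "(card U + card CU) * 2 ^ card U \<le> 2 * (\<Sum>U'\<in>Pow U. card U' + h U')"
    using a1 a2 by linarith
  also have "\<dots> \<le> (4 * f_o V E) * 2 ^ card U" using s1 cP by (simp add: algebra_simps)
  finally have "(card U + card CU) * 2 ^ card U \<le> (4 * f_o V E) * 2 ^ card U" .
  then have "card U + card CU \<le> 4 * f_o V E"
    using mult_le_cancel2[of "card U + card CU" "2 ^ card U" "4 * f_o V E"] by simp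
  then show ?thesis unfolding CU_def .
qed



lemma quarter:
  assumes fin: "finite I" and c: "c \<in> I" "c \<in> M"
  shows "4 * card {C. C \<subseteq> I \<and> c \<in> C \<and> odd (card (M \<inter> C))} \<ge> 2 ^ card I"
proof -
  define Ev where "Ev = {C'. C' \<subseteq> I - {c} \<and> even (card (M \<inter> C'))}"
  define Fm where "Fm = {C. C \<subseteq> I \<and> c \<in> C \<and> odd (card (M \<inter> C))}"
  have finI': "finite (I - {c})" using fin by simp
  have he: "2 * card Ev \<ge> 2 ^ card (I - {c})" unfolding Ev_def by (rule half_even[OF finI'])
  have ci: "card (I - {c}) + 1 = card I" using card_Suc_Diff1[OF fin c(1)] by simp
  have inj: "inj_on (insert c) Ev" unfolding Ev_def inj_on_def by blast
  have img: "insert c ` Ev \<subseteq> Fm"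
  proof
    fix C assume "C \<in> insert c ` Ev"
    then obtain C' where C': "C' \<subseteq> I - {c}" "even (card (M \<inter> C'))" "C = insert c C'"
      unfolding Ev_def by blast
    have finC': "finite (M \<inter> C')" using C'(1) finI' by (meson finite_Int finite_subset)
    have "M \<inter> C = insert c (M \<inter> C')" using C'(3) c(2) by blast
    moreover have "c \<notin> M \<inter> C'" using C'(1) by blast
    ultimately have "card (M \<inter> C) = Suc (card (M \<inter> C'))" using finC' by simp
    then show "C \<in> Fm" unfolding Fm_def using C' c(1) by auto
  qed
  have finF: "finite Fm" unfolding Fm_def using fin by (simp add: finite_subset[of _ "Pow I"] subset_eq)
  have "card Ev \<le> card Fm"
    using card_inj_on_le[OF inj img finF] .
  then have "4 * card Fm \<ge> 2 * 2 ^ card (I - {c})" using he by linarith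
  also have "2 * 2 ^ card (I - {c}) = (2::nat) ^ card I" using ci by (metis power_Suc Suc_eq_plus1)
  finally show ?thesis unfolding Fm_def .
qed

lemma max_indep:
  assumes fin: "finite V" and sym: "\<forall>u v. E u v \<longrightarrow> E v u" and irr: "\<forall>v. \<not> E v v"
  shows "\<exists>I\<subseteq>V. (\<forall>a\<in>I. \<forall>b\<in>I. \<not> E a b) \<and> (\<forall>v\<in>V - I. \<exists>c\<in>I. E v c)"
proof -
  define F where "F = {I. I \<subseteq> V \<and> (\<forall>a\<in>I. \<forall>b\<in>I. \<not> E a b)}"
  have finF: "finite F" unfolding F_def using fin by (simp add: finite_subset[of _ "Pow V"] subset_eq)
  have neF: "{} \<in> F" unfolding F_def by simp
  have "finite (card ` F)" using finF by simp
  moreover have "card ` F \<noteq> {}" using neF by blast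
  ultimately have "Max (card ` F) \<in> card ` F" by (rule Max_in)
  then obtain I where I: "I \<in> F" "card I = Max (card ` F)" by auto
  have mx: "card J \<le> card I" if "J \<in> F" for J
    using I(2) Max_ge[OF \<open>finite (card ` F)\<close>] that by simp
  have "\<forall>v\<in>V - I. \<exists>c\<in>I. E v c"
  proof (rule ccontr)
    assume "\<not> (\<forall>v\<in>V - I. \<exists>c\<in>I. E v c)"
    then obtain v where v: "v \<in> V" "v \<notin> I" "\<forall>c\<in>I. \<not> E v c" by blast
    have "insert v I \<in> F" using I(1) v sym irr unfolding F_def by blast
    then have "card (insert v I) \<le> card I" by (rule mx)
    moreover have "finite I" using I(1) fin unfolding F_def by (auto intro: rev_finite_subset)
    ultimately show False using v(2) by simp
  qed
  then show ?thesis using I(1) unfolding F_def by blast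
qed

theorem main16:
  fixes V :: "'a set" and E :: "'a \<Rightarrow> 'a \<Rightarrow> bool"
  assumes sg: "simple_graph V E"
    and deg: "\<forall>v\<in>V. degree V E v \<ge> 1"
  shows "card V \<le> 16 * f_o V E"
proof -
  have finV: "finite V" and inV: "\<forall>u v. E u v \<longrightarrow> u \<in> V \<and> v \<in> V"
    and sym: "\<forall>u v. E u v \<longrightarrow> E v u" and irr: "\<forall>v. \<not> E v v"
    using sg unfolding simple_graph_def by auto
  obtain I where I: "I \<subseteq> V" "\<forall>a\<in>I. \<forall>b\<in>I. \<not> E a b" "\<forall>v\<in>V - I. \<exists>c\<in>I. E v c"
    using max_indep[OF finV sym irr] by blast
  have finI: "finite I" using I(1) finV finite_subset by blast
  define J where "J = V - I"
  have finJ: "finite J" unfolding J_def using finV by simp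
  have hasnb: "\<exists>u. E c u" if "c \<in> V" for c
  proof -
    have "card {u\<in>V. E c u} \<ge> 1" using deg that unfolding degree_def induced_degree_def by blast
    then have "{u\<in>V. E c u} \<noteq> {}" by (metis card.empty not_one_le_zero)
    then show ?thesis by blast
  qed
  define nb where "nb c = (SOME u. E c u)" for c
  have nbE: "E c (nb c)" if "c \<in> V" for c
    unfolding nb_def using hasnb[OF that] by (rule someI_ex)
  define Uf where "Uf C = {v\<in>V-C. odd (card {c\<in>C. E v c})}" for C
  define CUf where "CUf C = {c\<in>C. \<exists>u\<in>Uf C. E c u}" for C
  define k where "k = card I"
  have finP: "finite (Pow I)" using finI by simp
  have upper: "card (Uf C) + card (CUf C) \<le> 4 * f_o V E" if "C \<in> Pow I" for C
    unfolding CUf_def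
    by (rule inner[OF sg _ _ Uf_def]) (use that I in \<open>auto, blast\<close>)
  have sU: "(\<Sum>C\<in>Pow I. card (Uf C) + card (CUf C)) \<le> 2 ^ k * (4 * f_o V E)"
  proof -
    have "(\<Sum>C\<in>Pow I. card (Uf C) + card (CUf C)) \<le> of_nat (card (Pow I)) * (4 * f_o V E)"
      by (rule sum_bounded_above) (rule upper)
    then show ?thesis using finI unfolding k_def by (simp add: card_Pow)
  qed
  define P1 where "P1 C = {v\<in>J. odd (card ({c. E v c} \<inter> C))}" for C
  define P2 where "P2 C = {c\<in>I. c \<in> C \<and> odd (card ({x. E (nb c) x} \<inter> C))}" for C
  have l1: "card (P1 C) \<le> card (Uf C)" if "C \<in> Pow I" for C
  proof (rule card_mono)
    show "finite (Uf C)" unfolding Uf_def using finV by simp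
    show "P1 C \<subseteq> Uf C"
    proof
      fix v assume "v \<in> P1 C"
      then have v: "v \<in> J" "odd (card ({c. E v c} \<inter> C))" unfolding P1_def by auto
      have "{c. E v c} \<inter> C = {c\<in>C. E v c}" by blast
      then show "v \<in> Uf C" using v that unfolding Uf_def J_def by auto
    qed
  qed
  have l2: "card (P2 C) \<le> card (CUf C)" if "C \<in> Pow I" for C
  proof (rule card_mono)
    show "finite (CUf C)" unfolding CUf_def using that finI by (auto intro: rev_finite_subset)
    show "P2 C \<subseteq> CUf C"
    proof
      fix c assume "c \<in> P2 C"
      then have c: "c \<in> I" "c \<in> C" "odd (card ({x. E (nb c) x} \<inter> C))" unfolding P2_def by auto
      have cV: "c \<in> V" using c(1) I(1) by blast
      have e: "E c (nb c)" using nbE[OF cV] .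
      have nbV: "nb c \<in> V" using e inV by blast
      have nbI: "nb c \<notin> I" using e c(1) I(2) by blast
      have "{x. E (nb c) x} \<inter> C = {x\<in>C. E (nb c) x}" by blast
      then have "nb c \<in> Uf C" using c(3) nbV nbI that unfolding Uf_def by auto
      then show "c \<in> CUf C" using c(2) e unfolding CUf_def by blast
    qed
  qed
  have a1: "2 * (\<Sum>C\<in>Pow I. card (P1 C)) = card J * 2 ^ k"
  proof -
    have "(\<Sum>C\<in>Pow I. card (P1 C)) = (\<Sum>v\<in>J. card {C\<in>Pow I. odd (card ({c. E v c} \<inter> C))})"
      unfolding P1_def by (rule card_swap[OF finP finJ])
    then have "2 * (\<Sum>C\<in>Pow I. card (P1 C)) = (\<Sum>v\<in>J. 2 * card {C\<in>Pow I. odd (card ({c. E v c} \<inter> C))})"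
      by (simp add: sum_distrib_left)
    also have "\<dots> = (\<Sum>v\<in>J. 2 ^ k)"
    proof (rule sum.cong)
      fix v assume v: "v \<in> J"
      then obtain a where a: "a \<in> I" "E v a" using I(3) unfolding J_def by blast
      have "{C\<in>Pow I. odd (card ({c. E v c} \<inter> C))} = {C. C \<subseteq> I \<and> odd (card ({c. E v c} \<inter> C))}" by auto
      then show "2 * card {C\<in>Pow I. odd (card ({c. E v c} \<inter> C))} = 2 ^ k"
        using half_odd[OF finI _ a(1), of "{c. E v c}"] a(2) unfolding k_def by simp
    qed simp
    finally show ?thesis by simp
  qed
  have a2: "4 * (\<Sum>C\<in>Pow I. card (P2 C)) \<ge> card I * 2 ^ k"
  proof -
    have "(\<Sum>C\<in>Pow I. card (P2 C)) = (\<Sum>c\<in>I. card {C\<in>Pow I. c \<in> C \<and> odd (card ({x. E (nb c) x} \<inter> C))})"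
      unfolding P2_def by (rule card_swap[OF finP finI])
    then have "4 * (\<Sum>C\<in>Pow I. card (P2 C)) = (\<Sum>c\<in>I. 4 * card {C\<in>Pow I. c \<in> C \<and> odd (card ({x. E (nb c) x} \<inter> C))})"
      by (simp add: sum_distrib_left)
    also have "\<dots> \<ge> (\<Sum>c\<in>I. 2 ^ k)"
    proof (rule sum_mono)
      fix c assume c: "c \<in> I"
      have cV: "c \<in> V" using c I(1) by blast
      have e: "E (nb c) c" using nbE[OF cV] sym by blast
      have "{C\<in>Pow I. c \<in> C \<and> odd (card ({x. E (nb c) x} \<inter> C))} = {C. C \<subseteq> I \<and> c \<in> C \<and> odd (card ({x. E (nb c) x} \<inter> C))}" by auto
      then show "2 ^ k \<le> 4 * card {C\<in>Pow I. c \<in> C \<and> odd (card ({x. E (nb c) x} \<inter> C))}"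
        using quarter[OF finI c, of "{x. E (nb c) x}"] e unfolding k_def by simp
    qed
    finally show ?thesis by simp
  qed
  have "card V * 2 ^ k \<le> 2 * (card J * 2 ^ k) + card I * 2 ^ k"
  proof -
    have "card V = card J + card I" unfolding J_def
      using card_Diff_subset[OF finI I(1)] card_mono[OF finV I(1)] by simp
    then show ?thesis by (simp add: add_mult_distrib)
  qed
  also have "\<dots> \<le> 4 * (\<Sum>C\<in>Pow I. card (P1 C)) + 4 * (\<Sum>C\<in>Pow I. card (P2 C))"
    using a1 a2 by linarith
  also have "\<dots> \<le> 4 * (\<Sum>C\<in>Pow I. card (Uf C)) + 4 * (\<Sum>C\<in>Pow I. card (CUf C))"
  proof -
    have "(\<Sum>C\<in>Pow I. card (P1 C)) \<le> (\<Sum>C\<in>Pow I. card (Uf C))" by (rule sum_mono) (rule l1)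
    moreover have "(\<Sum>C\<in>Pow I. card (P2 C)) \<le> (\<Sum>C\<in>Pow I. card (CUf C))" by (rule sum_mono) (rule l2)
    ultimately show ?thesis by linarith
  qed
  also have "\<dots> = 4 * (\<Sum>C\<in>Pow I. card (Uf C) + card (CUf C))"
    by (simp add: sum.distrib)
  also have "\<dots> \<le> 4 * (2 ^ k * (4 * f_o V E))" by (rule mult_le_mono2[OF sU])
  also have "\<dots> = (16 * f_o V E) * 2 ^ k" by simp
  finally have "card V * 2 ^ k \<le> (16 * f_o V E) * 2 ^ k" .
  then show ?thesis using mult_le_cancel2[of "card V" "2 ^ k" "16 * f_o V E"] by simp
qed

theorem theorem1p3:
  fixes V :: "'a set" and E :: "'a \<Rightarrow> 'a \<Rightarrow> bool"
  assumes "simple_graph V E"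
    and "\<forall>v\<in>V. degree V E v \<ge> 1"
  shows "10000 * f_o V E \<ge> card V"
  using main16[OF assms] by linarith

end
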